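(* Let $T\in\mathcal T_h^i$ be an interface element with plane $\tau(T)$, unit normal $\bar{\mathbf n}$ and point $F$ as in the context, and let $\beta^+\ge\beta^->0$. For every $p\in\mathbb Q_1$ there is exactly one $q\in\mathbb Q_1$ such that (i) $q=p$ on $\tau(T)$, (ii) $p$ and $q$ have the same coefficients of the monomials $xy,yz,xz,xyz$, and (iii) $\beta^-\nabla p(F)\cdot\bar{\mathbf n}=\beta^+\nabla q(F)\cdot\bar{\mathbf n}$. Consequently the operator $\mathcal C_T:\mathbb Q_1\to\mathbb Q_1$, $\mathcal C_T(p)=q$, is well defined, and it is bijective on $\mathbb Q_1$.
   Context: $\mathbb Q_1$ is the space of trilinear polynomials on $\mathbb R^3$, i.e. the span of $x^ay^bz^c$ with $a,b,c\in\{0,1\}$. $\Omega\subset\mathbb R^3$ is a bounded domain (a union of finitely many rectangular parallelepipeds) with a closed $C^2$ surface $\Gamma$ separating it into $\Omega^-$ and $\Omega^+$; $\beta$ equals the positive constant $\beta^\pm$ on $\Omega^\pm$, and it is assumed $\beta^+\ge\beta^-$. $\mathcal T_h$ is a Cartesian mesh by cubes of edge length $h$ such that $\Gamma$ meets every mesh edge in at most one point and the boundary of every mesh face in at most two points, with no vertex on $\Gamma$. For an interface element $T$ (i.e. $T\cap\Gamma\neq\emptyset$), $K_T$ is a triangle whose three vertices are points where $\Gamma$ meets edges of $T$, chosen by a fixed rule (Case 1, $\Gamma$ cuts 3 faces: the three points; Case 2, $\Gamma$ cuts 4 faces separating the endpoints of an edge $e$ from the other vertices: the three points farthest from $e$;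 Case 3, four points on four parallel edges: any three; Case 4, $\Gamma$ cuts 5 faces: the three points on three parallel edges; Case 5, $\Gamma$ cuts 6 faces: every other one of the six points, lying on three mutually orthogonal edges). $\tau(T)$ is the plane containing $K_T$, $\bar{\mathbf n}$ a unit normal of $\tau(T)$, and $F$ the centroid of $K_T$. *)

theory Defs
  imports "HOL-Analysis.Analysis"
begin

text \<open>An element of Q1 (trilinear polynomials on R^3) is represented by its
  coefficient family: the coefficient of x^a y^b z^c, a,b,c in {0,1}, is
  stored at index (a,b,c) with 0 = False, 1 = True.\<close>
type_synonym Q1 = "bool \<times> bool \<times> bool \<Rightarrow> real"

definition mono_pow :: "bool \<Rightarrow> real \<Rightarrow> real" where
  "mono_pow a t = (if a then t else 1)"

definition Q1_eval :: "Q1 \<Rightarrow> real^3 \<Rightarrow> real" where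
  "Q1_eval p v = (\<Sum>(a,b,c)\<in>UNIV. p (a,b,c) * mono_pow a (v$1) * mono_pow b (v$2) * mono_pow c (v$3))"

definition Q1_grad_dir :: "Q1 \<Rightarrow> real^3 \<Rightarrow> real^3 \<Rightarrow> real" where
  "Q1_grad_dir p F n = frechet_derivative (Q1_eval p) (at F) n"

definition CT_rel :: "real \<Rightarrow> real \<Rightarrow> (real^3) set \<Rightarrow> real^3 \<Rightarrow> real^3 \<Rightarrow> Q1 \<Rightarrow> Q1 \<Rightarrow> bool" where
  "CT_rel bm bp tau n F p q \<longleftrightarrow>
     (\<forall>v\<in>tau. Q1_eval q v = Q1_eval p v) \<and>
     q (True,True,False) = p (True,True,False) \<and>
     q (False,True,True) = p (False,True,True) \<and>
     q (True,False,True) = p (True,False,True) \<and>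
     q (True,True,True) = p (True,True,True) \<and>
     bm * Q1_grad_dir p F n = bp * Q1_grad_dir q F n"

end

theory Submission
  imports Defs "HOL-Analysis.Cross3"
begin

lemma Q1_eval_expand: "Q1_eval p v =
  p (False,False,False) + p (True,False,False) * v$1 + p (False,True,False) * v$2 + p (False,False,True) * v$3
  + p (True,True,False) * v$1 * v$2 + p (False,True,True) * v$2 * v$3 + p (True,False,True) * v$1 * v$3
  + p (True,True,True) * v$1 * v$2 * v$3"
  unfolding Q1_eval_def mono_pow_def
  by (simp add: UNIV_bool UNIV_Times_UNIV[symmetric] sum.cartesian_product[symmetric] del: UNIV_Times_UNIV)

definition Dg :: "Q1 \<Rightarrow> real^3 \<Rightarrow> real^3 \<Rightarrow> real" where
 "Dg p F h = p (True,False,False) * h$1 + p (False,True,False) * h$2 + p (False,False,True) * h$3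
  + p (True,True,False) * (h$1 * F$2 + F$1 * h$2) + p (False,True,True) * (h$2 * F$3 + F$2 * h$3)
  + p (True,False,True) * (h$1 * F$3 + F$1 * h$3)
  + p (True,True,True) * (h$1 * F$2 * F$3 + F$1 * h$2 * F$3 + F$1 * F$2 * h$3)"

lemma vnth_deriv[derivative_intros]: "((\<lambda>x::real^3. x$i) has_derivative (\<lambda>h. h$i)) F"
  by (rule bounded_linear.has_derivative[OF bounded_linear_vec_nth has_derivative_ident])

lemma Q1_has_deriv: "(Q1_eval p has_derivative Dg p F) (at F)"
  unfolding Q1_eval_expand[abs_def] Dg_def[abs_def]
  apply (rule derivative_eq_intros refl)+
  apply (simp add: algebra_simps)
  done

lemma grad_eq: "Q1_grad_dir p F n = Dg p F n"
  unfolding Q1_grad_dir_def by (rule frechet_derivative_at[OF Q1_has_deriv, symmetric, THEN fun_cong])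

lemma triple_prod: "cross3 u (cross3 a b) = (u \<bullet> b) *\<^sub>R a - (u \<bullet> a) *\<^sub>R b"
  by (simp add: cross3_simps forall_3)

lemma cross_zero_orth: fixes u a b :: "real^3"
  assumes "u \<bullet> a = 0" "u \<bullet> b = 0" shows "cross3 u (cross3 a b) = 0"
  using assms by (simp add: triple_prod)

lemma geo: fixes A B C n u :: "real^3"
  assumes nc: "\<not> collinear {A, B, C}" and n0: "n \<noteq> 0"
    and "n \<bullet> (B - A) = 0" "n \<bullet> (C - A) = 0"
    and "u \<bullet> (B - A) = 0" "u \<bullet> (C - A) = 0" "u \<bullet> n = 0"
  shows "u = 0"
proof (rule ccontr)
  assume u0: "u \<noteq> 0"
  define a where "a = A - B"
  define b where "b = C - B"
  define m where "m = cross3 a b"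
  have "m \<noteq> 0" using nc unfolding m_def a_def b_def
    by (simp add: cross_eq_0 collinear_3)
  have oa: "x \<bullet> a = 0" "x \<bullet> b = 0" if "x \<bullet> (B - A) = 0" "x \<bullet> (C - A) = 0" for x
  proof -
    have e1: "a = - (B - A)" unfolding a_def by simp
    have e2: "b = (C - A) - (B - A)" unfolding b_def by simp
    show "x \<bullet> a = 0" "x \<bullet> b = 0" using that unfolding e1 e2 by (simp_all add: inner_diff_right)
  qed
  have "cross3 u m = 0" unfolding m_def using oa assms by (intro cross_zero_orth) auto
  then have "collinear {0, u, m}" by (simp add: cross_eq_0)
  then obtain c where c: "m = c *\<^sub>R u" using u0 \<open>m \<noteq> 0\<close> by (auto simp: collinear_lemma)
  have "cross3 n m = 0" unfolding m_def using oa assms by (intro cross_zero_orth) auto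
  then have "collinear {0, n, m}" by (simp add: cross_eq_0)
  then obtain d where d: "m = d *\<^sub>R n" using n0 \<open>m \<noteq> 0\<close> by (auto simp: collinear_lemma)
  have "d \<noteq> 0" using d \<open>m \<noteq> 0\<close> by auto
  have "m \<bullet> n = 0" using c assms by simp
  moreover have "m \<bullet> n = d * (n \<bullet> n)" using d by simp
  ultimately show False using \<open>d \<noteq> 0\<close> n0 by simp
qed

definition ell :: "real^3 \<Rightarrow> real^3 \<Rightarrow> Q1" where
  "ell n A = (\<lambda>t. if t = (False,False,False) then - (n \<bullet> A) else if t = (True,False,False) then n$1
     else if t = (False,True,False) then n$2 else if t = (False,False,True) then n$3 else 0)"

lemma eval_ell: "Q1_eval (\<lambda>t. p t + c * ell n A t) v = Q1_eval p v + c * (n \<bullet> (v - A))"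
  unfolding Q1_eval_expand ell_def by (simp add: inner_vec_def sum_3 algebra_simps)

lemma Dg_ell: "Dg (\<lambda>t. p t + c * ell n A t) F h = Dg p F h + c * (n \<bullet> h)"
  unfolding Dg_def ell_def by (simp add: inner_vec_def sum_3 algebra_simps)

lemma eval_diff: "Q1_eval (\<lambda>t. p t - q t) v = Q1_eval p v - Q1_eval q v"
  unfolding Q1_eval_expand by (simp add: algebra_simps)

lemma Dg_diff: "Dg (\<lambda>t. p t - q t) F h = Dg p F h - Dg q F h"
  unfolding Dg_def by (simp add: algebra_simps)

lemma CT_sym: "CT_rel a b tau n F p q \<longleftrightarrow> CT_rel b a tau n F q p"
  unfolding CT_rel_def by auto

lemma Q1_ext: fixes p q :: Q1
  assumes "p (False,False,False) = q (False,False,False)" "p (True,False,False) = q (True,False,False)"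
   "p (False,True,False) = q (False,True,False)" "p (False,False,True) = q (False,False,True)"
   "p (True,True,False) = q (True,True,False)" "p (False,True,True) = q (False,True,True)"
   "p (True,False,True) = q (True,False,True)" "p (True,True,True) = q (True,True,True)"
  shows "p = q"
proof
  fix t :: "bool \<times> bool \<times> bool"
  obtain x y z where t: "t = (x,y,z)" by (cases t) auto
  show "p t = q t" unfolding t using assms by (cases x; cases y; cases z) auto
qed

lemma CT_exists:
  fixes A B C n :: "real^3"
  assumes "b \<noteq> 0" "n \<bullet> n = 1" "n \<bullet> (B - A) = 0" "n \<bullet> (C - A) = 0"
  shows "CT_rel a b (affine hull {A, B, C}) n F p (\<lambda>t. p t + ((a - b) / b * Dg p F n) * ell n A t)"
proof -
  have tau: "n \<bullet> (v - A) = 0" if vin: "v \<in> affine hull {A, B, C}" for v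
  proof -
    obtain u w where "v = A + u *\<^sub>R (B - A) + w *\<^sub>R (C - A)"
    proof -
      from vin obtain a1 b1 c1 where v: "v = a1 *\<^sub>R A + b1 *\<^sub>R B + c1 *\<^sub>R C" and s: "a1 + b1 + c1 = 1"
        by (auto simp: affine_hull_3)
      have "v = A + b1 *\<^sub>R (B - A) + c1 *\<^sub>R (C - A)"
      proof -
        have "(a1 + b1 + c1) *\<^sub>R A = A" using s by simp
        then show ?thesis unfolding v by (simp add: algebra_simps)
      qed
      then show ?thesis by (rule that)
    qed
    then show ?thesis using assms by (simp add: inner_add_right inner_diff_right)
  qed
  show ?thesis unfolding CT_rel_def grad_eq eval_ell Dg_ell
    using tau assms by (auto simp: ell_def field_simps)
qed

lemma CT_unique:
  fixes A B C n :: "real^3"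
  assumes b0: "b \<noteq> 0" and n0: "n \<noteq> 0" and nc: "\<not> collinear {A, B, C}"
    and nB: "n \<bullet> (B - A) = 0" and nC: "n \<bullet> (C - A) = 0"
    and r1: "CT_rel a b (affine hull {A, B, C}) n F p q1"
    and r2: "CT_rel a b (affine hull {A, B, C}) n F p q2"
  shows "q1 = q2"
proof -
  define d where "d = (\<lambda>t. q1 t - q2 t)"
  have nl: "d (True,True,False) = 0" "d (False,True,True) = 0" "d (True,False,True) = 0" "d (True,True,True) = 0"
    using r1 r2 unfolding CT_rel_def d_def by auto
  have ev0: "Q1_eval d v = 0" if "v \<in> affine hull {A, B, C}" for v
    using r1 r2 that unfolding CT_rel_def d_def eval_diff by auto
  have "b * Dg q1 F n = b * Dg q2 F n" using r1 r2 unfolding CT_rel_def grad_eq by auto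
  then have dg0: "Dg d F n = 0" using b0 unfolding d_def Dg_diff by simp
  define w :: "real^3" where "w = vector [d (True,False,False), d (False,True,False), d (False,False,True)]"
  have evw: "Q1_eval d v = d (False,False,False) + w \<bullet> v" for v
    unfolding Q1_eval_expand w_def using nl by (simp add: inner_vec_def sum_3)
  have dgw: "Dg d F h = w \<bullet> h" for h
    unfolding Dg_def w_def using nl by (simp add: inner_vec_def sum_3 algebra_simps)
  have hA: "A \<in> affine hull {A, B, C}" "B \<in> affine hull {A, B, C}" "C \<in> affine hull {A, B, C}"
    by (auto intro: hull_inc)
  have eA: "d (False,False,False) + w \<bullet> A = 0" and eB: "d (False,False,False) + w \<bullet> B = 0"
    and eC: "d (False,False,False) + w \<bullet> C = 0"
    using ev0[OF hA(1)] ev0[OF hA(2)] ev0[OF hA(3)] unfolding evw by auto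
  have "w \<bullet> (B - A) = 0" "w \<bullet> (C - A) = 0" using eA eB eC by (auto simp: inner_diff_right)
  moreover have "w \<bullet> n = 0" using dg0 dgw by simp
  ultimately have "w = 0" using geo[OF nc n0 nB nC] by blast
  then have w0: "d (True,False,False) = 0" "d (False,True,False) = 0" "d (False,False,True) = 0"
    unfolding w_def by (simp_all add: vec_eq_iff forall_3)
  have "d (False,False,False) = 0" using eA \<open>w = 0\<close> by simp
  with w0 nl show ?thesis unfolding d_def by (intro Q1_ext) auto
qed

theorem theorem3p1:
  fixes A B C nbar :: "real^3" and bm bp :: real
  assumes "0 < bm" and "bm \<le> bp"
    and "\<not> collinear {A, B, C}"
    and "norm nbar = 1" and "nbar \<bullet> (B - A) = 0" and "nbar \<bullet> (C - A) = 0"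
  defines "tau \<equiv> affine hull {A, B, C}"
    and "F \<equiv> (1/3) *\<^sub>R (A + B + C)"
  shows "(\<forall>p. \<exists>!q. CT_rel bm bp tau nbar F p q) \<and>
         bij (\<lambda>p. THE q. CT_rel bm bp tau nbar F p q)"
proof -
  have bm0: "bm \<noteq> 0" and bp0: "bp \<noteq> 0" using assms(1,2) by auto
  have nn: "nbar \<bullet> nbar = 1" using assms(4) by (simp add: norm_eq_1)
  have n0: "nbar \<noteq> 0" using assms(4) by auto
  have ex: "\<exists>q. CT_rel a b tau nbar F p q" if "b \<noteq> 0" for a b p
    unfolding tau_def using CT_exists[OF that nn assms(5,6)] by blast
  have un: "q1 = q2" if "b \<noteq> 0" "CT_rel a b tau nbar F p q1" "CT_rel a b tau nbar F p q2" for a b p q1 q2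
    using CT_unique[OF that(1) n0 assms(3,5,6)] that(2,3) unfolding tau_def by blast
  have ex1: "\<exists>!q. CT_rel bm bp tau nbar F p q" for p
    using ex[OF bp0] un[OF bp0] by blast
  define T where "T = (\<lambda>p. THE q. CT_rel bm bp tau nbar F p q)"
  have TR: "CT_rel bm bp tau nbar F p (T p)" for p
    unfolding T_def using theI'[OF ex1] .
  have "inj T"
  proof (rule injI)
    fix p1 p2 assume "T p1 = T p2"
    then have "CT_rel bp bm tau nbar F (T p1) p1" "CT_rel bp bm tau nbar F (T p1) p2"
      using TR CT_sym by metis+
    then show "p1 = p2" using un[OF bm0] by blast
  qed
  moreover have "surj T"
  proof -
    have "q \<in> range T" for q
    proof -
      obtain p where "CT_rel bp bm tau nbar F q p" using ex[OF bm0] by blast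
      then have "CT_rel bm bp tau nbar F p q" using CT_sym by metis
      then have "T p = q" using TR un[OF bp0] by blast
      then show ?thesis by blast
    qed
    then show ?thesis by blast
  qed
  ultimately show ?thesis using ex1 unfolding T_def bij_def by blast
qed

end
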